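(* Let $f:\mathbb{N}_0^n\to[0,\infty)$ be subadditive, and extend it to $\mathbb{R}_0^n=[0,\infty)^n$ by $f(\boldsymbol r)=f(\lceil\boldsymbol r\rceil)$ (ceiling taken coordinatewise). Then for every $\boldsymbol r\in\mathbb{R}_0^n$ the limit $\hat f(\boldsymbol r)=\lim_{t\to\infty}f(t\boldsymbol r)/t$ (over real $t\to\infty$) exists and is finite, and $\hat f$ is positively homogeneous: $\hat f(\alpha\boldsymbol r)=\alpha\hat f(\boldsymbol r)$ for all $\alpha\ge0$.
   Context: A function $f:\mathbb{N}_0^n\to[0,\infty)$ is subadditive if $f(\boldsymbol k+\boldsymbol m)\le f(\boldsymbol k)+f(\boldsymbol m)$ for all $\boldsymbol k,\boldsymbol m\in\mathbb{N}_0^n$. *)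

theory Defs
  imports "HOL-Analysis.Analysis"
begin

text \<open>Vectors in N_0^n and R^n are modelled as nat^'n and real^'n for a finite index type 'n.\<close>

definition subadditive :: "(nat^'n \<Rightarrow> real) \<Rightarrow> bool" where
  "subadditive f \<longleftrightarrow> (\<forall>k m. f (k + m) \<le> f k + f m)"

definition ceil_ext :: "(nat^'n \<Rightarrow> real) \<Rightarrow> real^'n \<Rightarrow> real" where
  "ceil_ext f r = f (\<chi> i. nat \<lceil>r $ i\<rceil>)"

definition fhat :: "(nat^'n \<Rightarrow> real) \<Rightarrow> real^'n \<Rightarrow> real" where
  "fhat f r = Lim at_top (\<lambda>t::real. ceil_ext f (t *\<^sub>R r) / t)"

end

theory Submission imports Defs begin
lemma sub_mult:
  assumes "subadditive f"
  shows "f ((\<chi> i. q * a$i) + m) \<le> real q * f a + f m"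
proof (induction q)
  case 0
  have "(\<chi> i. 0 * a$i) + m = m" by (simp add: vec_eq_iff)
  then show ?case by simp
next
  case (Suc q)
  have "(\<chi> i. Suc q * a$i) + m = a + ((\<chi> i. q * a$i) + m)" by (simp add: vec_eq_iff)
  then have "f ((\<chi> i. Suc q * a$i) + m) \<le> f a + f ((\<chi> i. q * a$i) + m)"
    using assms unfolding subadditive_def by metis
  then show ?case using Suc by (simp add: algebra_simps)
qed

definition E :: "'n \<Rightarrow> nat^'n" where "E x = (\<chi> j. if j = x then 1 else 0)"

lemma bound_set:
  assumes "subadditive f" "finite S"
  shows "f (\<chi> j. if j \<in> S then m$j else 0) \<le> f 0 + (\<Sum>i\<in>S. real (m$i) * f (E i))"
  using assms(2)
proof (induction S rule: finite_induct)
  case empty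
  have "(\<chi> j. if j \<in> {} then m$j else 0) = 0" by (simp add: vec_eq_iff)
  then show ?case by simp
next
  case (insert x S)
  have eq: "(\<chi> j. if j \<in> insert x S then m$j else 0) = (\<chi> i. (m$x) * E x$i) + (\<chi> j. if j \<in> S then m$j else 0)"
    using insert(2) by (auto simp: vec_eq_iff E_def)
  show ?case unfolding eq using sub_mult[OF assms(1), of "m$x" "E x" "(\<chi> j. if j \<in> S then m$j else 0)"]
    insert(1,2,3) by (simp add: algebra_simps)
qed

lemma bound:
  fixes m :: "nat^'n"
  assumes "subadditive f" "\<And>k. f k \<ge> 0" "\<And>i. real (m$i) \<le> M"
  shows "f m \<le> f 0 + M * (\<Sum>i\<in>UNIV. f (E i))"
proof -
  have "(\<chi> j. if j \<in> (UNIV::'n set) then m$j else 0) = m" by (simp add: vec_eq_iff)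
  then have "f m \<le> f 0 + (\<Sum>i\<in>UNIV. real (m$i) * f (E i))"
    using bound_set[OF assms(1), of UNIV m] by simp
  also have "(\<Sum>i\<in>UNIV. real (m$i) * f (E i)) \<le> (\<Sum>i\<in>UNIV. M * f (E i))"
    by (rule sum_mono) (simp add: assms(2,3) mult_right_mono)
  finally show ?thesis by (simp add: sum_distrib_left)
qed

lemma coord:
  fixes s T \<rho> v R :: real
  assumes s: "s \<ge> 1" and T: "T \<ge> 1" and rho: "\<rho> > 0" and v0: "v \<ge> 0"
    and vr: "v > 0 \<Longrightarrow> \<rho> \<le> v" and vR: "v \<le> R"
  defines "c \<equiv> s + 1/\<rho>"
  defines "q \<equiv> nat \<lfloor>T/c\<rfloor>"
  shows "q * nat\<lceil>s* v\<rceil> \<le> nat\<lceil>T* v\<rceil> \<and> real (nat\<lceil>T* v\<rceil> - q*nat\<lceil>s* v\<rceil>) \<le> T*R/(\<rho>* s) + 1 + s*R"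
proof (cases "v = 0")
  case True
  then show ?thesis using s T rho vR by (simp add: zero_le_mult_iff)
next
  case False
  then have v: "v > 0" using v0 by simp
  have rv: "\<rho> \<le> v" using vr v by simp
  have "1/\<rho> > 0" using rho by simp
  then have cpos: "c > 0" "c \<ge> s" using s unfolding c_def by linarith+
  have Tc: "T/c \<ge> 0" using cpos T by simp
  have qr: "real q = \<lfloor>T/c\<rfloor>" using Tc by (simp add: q_def)
  have q1: "real q \<le> T/c" "T/c - 1 < real q" "real q \<ge> 0" using qr by linarith+
  have a: "real (nat\<lceil>s* v\<rceil>) = \<lceil>s* v\<rceil>" using s v by simp
  have b: "real (nat\<lceil>T* v\<rceil>) = \<lceil>T* v\<rceil>" using T v by simp
  have a1: "s* v \<le> real (nat\<lceil>s* v\<rceil>)" "real (nat\<lceil>s* v\<rceil>) < s* v + 1" using a by linarith+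
  have b1: "T* v \<le> real (nat\<lceil>T* v\<rceil>)" "real (nat\<lceil>T* v\<rceil>) < T* v + 1" using b by linarith+
  have "s* v + 1 \<le> v * c" using rv rho by (simp add: c_def algebra_simps field_simps)
  then have "real (nat\<lceil>s* v\<rceil>) \<le> v * c" using a1 by linarith
  then have "real q * real (nat\<lceil>s* v\<rceil>) \<le> (T/c) * (v * c)"
    using q1 by (intro mult_mono) auto
  also have "\<dots> = T* v" using cpos by simp
  finally have le: "real (q * nat\<lceil>s* v\<rceil>) \<le> real (nat\<lceil>T* v\<rceil>)" using b1 by (simp only: of_nat_mult)
  then have le': "q * nat\<lceil>s* v\<rceil> \<le> nat\<lceil>T* v\<rceil>" by linarith
  have "real (nat\<lceil>T* v\<rceil> - q*nat\<lceil>s* v\<rceil>) = real (nat\<lceil>T* v\<rceil>) - real q * real (nat\<lceil>s* v\<rceil>)"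
    using le' by (simp add: of_nat_diff)
  also have "\<dots> \<le> T* v + 1 - real q * (s* v)"
    using b1 a1 q1 by (smt (verit) mult_left_mono)
  also have "\<dots> \<le> T* v + 1 - (T/c - 1) * (s* v)"
    using q1 s v by (smt (verit) mult_right_mono zero_le_mult_iff)
  also have "\<dots> = T* v *(1 - s/c) + 1 + s* v"
    using cpos by (simp add: field_simps)
  also have "1 - s/c = (1/\<rho>)/c"
    using cpos rho by (simp add: c_def field_simps)
  also have "T* v *((1/\<rho>)/c) + 1 + s* v = T* v *(1/\<rho>)/c + 1 + s* v" by simp
  also have "\<dots> \<le> T*R/(\<rho>* s) + 1 + s*R"
  proof -
    have "T* v *(1/\<rho>)/c \<le> T*R*(1/\<rho>)/s"
      using cpos T v vR rho s by (intro frac_le mult_mono) auto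
    moreover have "s* v \<le> s*R" using s vR by simp
    ultimately show ?thesis by simp
  qed
  finally show ?thesis using le' by simp
qed

lemma key:
  fixes f :: "nat^'n \<Rightarrow> real" and r :: "real^'n"
  assumes nonneg: "\<And>k. f k \<ge> 0" and subadd: "subadditive f"
    and r0: "\<forall>i. r$i \<ge> 0" and rho: "\<rho> > 0" and rr: "\<And>i. r$i > 0 \<Longrightarrow> \<rho> \<le> r$i"
    and rR: "\<And>i. r$i \<le> R" and s: "s \<ge> 1" and T: "T \<ge> 1"
  defines "g \<equiv> \<lambda>t. f (\<chi> i. nat\<lceil>t * r$i\<rceil>)"
  defines "C \<equiv> (\<Sum>i\<in>UNIV. f (E i))"
  shows "g T / T \<le> g s / s + (C*R/\<rho>)/s + (f 0 + C*(1 + s*R))/T"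
proof -
  define c where "c = s + 1/\<rho>"
  define q where "q = nat \<lfloor>T/c\<rfloor>"
  define m where "m = (\<chi> i. nat\<lceil>T*r$i\<rceil> - q*nat\<lceil>s*r$i\<rceil>)"
  define M where "M = T*R/(\<rho>* s) + 1 + s*R"
  have co: "\<And>i. q * nat\<lceil>s*r$i\<rceil> \<le> nat\<lceil>T*r$i\<rceil> \<and> real (nat\<lceil>T*r$i\<rceil> - q*nat\<lceil>s*r$i\<rceil>) \<le> M"
    unfolding q_def c_def M_def using coord[OF s T rho] r0 rr rR by blast
  have dec: "(\<chi> i. nat\<lceil>T * r$i\<rceil>) = (\<chi> i. q * (\<chi> i. nat\<lceil>s * r$i\<rceil>)$i) + m"
    using co by (auto simp: vec_eq_iff m_def)
  have Cnn: "C \<ge> 0" unfolding C_def by (simp add: nonneg sum_nonneg)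
  have "g T \<le> real q * g s + f m"
    unfolding g_def dec by (rule sub_mult[OF subadd])
  also have "f m \<le> f 0 + M * C"
  proof -
    have "\<And>i. real (m$i) \<le> M"
    proof -
      fix i
      show "real (m$i) \<le> M" using co[of i] by (auto simp: m_def of_nat_diff)
    qed
    then show ?thesis unfolding C_def by (rule bound[OF subadd nonneg])
  qed
  finally have g1: "g T \<le> real q * g s + (f 0 + M * C)" by simp
  have "1/\<rho> > 0" using rho by simp
  then have cpos: "c > 0" "c \<ge> s" using s unfolding c_def by linarith+
  have Tc: "T/c \<ge> 0" using cpos T by simp
  have "real q = \<lfloor>T/c\<rfloor>" using Tc by (simp add: q_def)
  then have "real q \<le> T/c" by linarith
  also have "T/c \<le> T/s" using cpos s T by (simp add: frac_le)
  finally have "real q * g s \<le> (T/s) * g s" using nonneg unfolding g_def by (rule mult_right_mono)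
  with g1 have "g T \<le> (T/s) * g s + (f 0 + M * C)" by linarith
  then have "g T / T \<le> ((T/s) * g s + (f 0 + M * C)) / T" using T by (simp add: divide_right_mono)
  also have "\<dots> = g s / s + (C*R/\<rho>)/s + (f 0 + C*(1 + s*R))/T"
    using T s rho unfolding M_def by (simp add: field_simps)
  finally show ?thesis .
qed

lemma conv:
  fixes f :: "nat^'n \<Rightarrow> real" and r :: "real^'n"
  assumes nonneg: "\<And>k. f k \<ge> 0" and subadd: "subadditive f"
    and r0: "\<forall>i. r$i \<ge> 0"
  shows "\<exists>L. ((\<lambda>t::real. ceil_ext f (t *\<^sub>R r) / t) \<longlongrightarrow> L) at_top"
proof -
  define g where "g = (\<lambda>t. f (\<chi> i. nat\<lceil>t * r$i\<rceil>))"
  have gce: "\<And>t. ceil_ext f (t *\<^sub>R r) = g t" by (simp add: ceil_ext_def g_def)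
  define C where "C = (\<Sum>i\<in>UNIV. f (E i))"
  define R where "R = (\<Sum>i\<in>UNIV. r$i)"
  define P where "P = {i. r$i > 0}"
  define \<rho> where "\<rho> = (if P = {} then 1 else Min ((\<lambda>i. r$i) ` P))"
  have rR: "\<And>i. r$i \<le> R" unfolding R_def using r0 by (intro member_le_sum) auto
  have rho: "\<rho> > 0" unfolding \<rho>_def P_def by auto
  have rr: "\<And>i. r$i > 0 \<Longrightarrow> \<rho> \<le> r$i" unfolding \<rho>_def P_def by auto
  have Cnn: "C \<ge> 0" unfolding C_def by (simp add: nonneg sum_nonneg)
  have R0: "R \<ge> 0" unfolding R_def using r0 by (simp add: sum_nonneg)
  define A where "A = C*R/\<rho>"
  have A0: "A \<ge> 0" unfolding A_def using Cnn R0 rho by simp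
  define h where "h = (\<lambda>t. g t / t)"
  have K: "\<And>s T. s \<ge> 1 \<Longrightarrow> T \<ge> 1 \<Longrightarrow> h T \<le> h s + A/s + (f 0 + C*(1 + s*R))/T"
    unfolding h_def A_def g_def C_def using key[OF nonneg subadd r0 rho rr rR] by blast
  have hnn: "\<And>t. t \<ge> 1 \<Longrightarrow> h t \<ge> 0" unfolding h_def g_def using nonneg by simp
  define L where "L = Inf ((\<lambda>s. h s + A/s) ` {1..})"
  have bdd: "bdd_below ((\<lambda>s. h s + A/s) ` {1..})"
    by (rule bdd_belowI[of _ 0]) (use hnn A0 in auto)
  have Lle: "\<And>s. s \<ge> 1 \<Longrightarrow> L \<le> h s + A/s"
    unfolding L_def by (rule cInf_lower[OF _ bdd]) auto
  have "(h \<longlongrightarrow> L) at_top"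
  proof (rule tendstoI)
    fix e :: real assume e: "e > 0"
    have "L < L + e/2" using e by simp
    then have "\<exists>x\<in>{1..}. h x + A/x < L + e/2"
      using cInf_less_iff[OF _ bdd, of "L+e/2"] unfolding L_def by auto
    then obtain s where s: "s \<ge> 1" "h s + A/s < L + e/2" by auto
    define B where "B = f 0 + C*(1 + s*R)"
    have B0: "B \<ge> 0" unfolding B_def using nonneg Cnn R0 s by simp
    have ev1: "eventually (\<lambda>T. T \<ge> 1 \<and> T \<ge> 2*(B+1)/e \<and> T \<ge> 2*(A+1)/e) at_top"
      by (intro eventually_conj eventually_ge_at_top)
    show "eventually (\<lambda>T. dist (h T) L < e) at_top"
      using ev1
    proof eventually_elim
      case (elim T)
      then have T1: "T \<ge> 1" and TB: "T \<ge> 2*(B+1)/e" and TA: "T \<ge> 2*(A+1)/e" by auto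
      have Tp: "T > 0" using T1 by simp
      have "B/T < e/2"
      proof -
        have "2*(B+1) \<le> T*e" using TB e by (simp add: field_simps)
        then show ?thesis using Tp by (simp add: field_simps)
      qed
      moreover have "A/T < e/2"
      proof -
        have "2*(A+1) \<le> T*e" using TA e by (simp add: field_simps)
        then show ?thesis using Tp by (simp add: field_simps)
      qed
      moreover have "h T \<le> h s + A/s + B/T" using K[OF s(1) T1] unfolding B_def by simp
      moreover have "L \<le> h T + A/T" using Lle[OF T1] .
      ultimately have "h T - L < e" "L - h T < e" using s(2) by linarith+
      then show ?case by (auto simp add: dist_real_def)
    qed
  qed
  then show ?thesis unfolding h_def gce by blast
qed
theorem mainTheorem9:
  fixes f :: "nat^'n \<Rightarrow> real"
  assumes nonneg: "\<And>k. f k \<ge> 0"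
    and subadd: "subadditive f"
  shows "\<forall>r::real^'n. (\<forall>i. r $ i \<ge> 0) \<longrightarrow>
           ((\<lambda>t::real. ceil_ext f (t *\<^sub>R r) / t) \<longlongrightarrow> fhat f r) at_top
           \<and> (\<forall>\<alpha>::real. \<alpha> \<ge> 0 \<longrightarrow> fhat f (\<alpha> *\<^sub>R r) = \<alpha> * fhat f r)"
proof (intro allI impI conjI)
  have fh: "\<And>r L. ((\<lambda>t::real. ceil_ext f (t *\<^sub>R r) / t) \<longlongrightarrow> L) at_top \<Longrightarrow> fhat f r = L"
    unfolding fhat_def by (rule tendsto_Lim) simp_all
  fix r :: "real^'n" assume r0: "\<forall>i. r $ i \<ge> 0"
  obtain L where L: "((\<lambda>t::real. ceil_ext f (t *\<^sub>R r) / t) \<longlongrightarrow> L) at_top"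
    using conv[OF nonneg subadd r0] by blast
  have fr: "fhat f r = L" using fh[OF L] .
  show "((\<lambda>t::real. ceil_ext f (t *\<^sub>R r) / t) \<longlongrightarrow> fhat f r) at_top" using L fr by simp
  fix \<alpha> :: real assume a: "\<alpha> \<ge> 0"
  show "fhat f (\<alpha> *\<^sub>R r) = \<alpha> * fhat f r"
  proof (cases "\<alpha> = 0")
    case True
    have "\<And>t. ceil_ext f (t *\<^sub>R (\<alpha> *\<^sub>R r)) = f 0"
      using True by (simp add: ceil_ext_def zero_vec_def)
    moreover have "((\<lambda>t::real. f 0 / t) \<longlongrightarrow> 0) at_top"
      by (rule tendsto_divide_0[OF tendsto_const filterlim_at_top_imp_at_infinity[OF filterlim_ident]])
    ultimately have "fhat f (\<alpha> *\<^sub>R r) = 0" using fh by simp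
    then show ?thesis using True by simp
  next
    case False
    then have ap: "\<alpha> > 0" using a by simp
    have lim: "filterlim (\<lambda>t::real. \<alpha> * t) at_top at_top"
      by (rule filterlim_tendsto_pos_mult_at_top[OF tendsto_const ap filterlim_ident])
    have "((\<lambda>t. ceil_ext f ((\<alpha> * t) *\<^sub>R r) / (\<alpha> * t)) \<longlongrightarrow> L) at_top"
      using filterlim_compose[OF L lim] by simp
    then have "((\<lambda>t. \<alpha> * (ceil_ext f ((\<alpha> * t) *\<^sub>R r) / (\<alpha> * t))) \<longlongrightarrow> \<alpha> * L) at_top"
      by (intro tendsto_mult tendsto_const)
    moreover have "\<And>t. \<alpha> * (ceil_ext f ((\<alpha> * t) *\<^sub>R r) / (\<alpha> * t)) = ceil_ext f (t *\<^sub>R (\<alpha> *\<^sub>R r)) / t"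
      using ap by (simp add: mult.commute)
    ultimately have "((\<lambda>t. ceil_ext f (t *\<^sub>R (\<alpha> *\<^sub>R r)) / t) \<longlongrightarrow> \<alpha> * L) at_top" by simp
    then show ?thesis using fh fr by simp
  qed
qed
end
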